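(* Let $m\geq 13$ and $n\geq 13$ be integers with $m\equiv 2 \pmod 3$ and $n\equiv 2\pmod 3$. Then $\gamma_{sR}(C_m\vee C_n)=2$.
   Context: $C_n$ denotes the cycle on $n$ vertices. For a graph $G=(V,E)$ and $x\in V$, $N_G[x]=\{x\}\cup\{y: xy\in E\}$. A signed Roman dominating function (SRDF) on $G$ is a function $f:V\to\{-1,1,2\}$ such that (a) $\sum_{y\in N_G[x]}f(y)\geq 1$ for every $x\in V$, and (b) every vertex $x$ with $f(x)=-1$ is adjacent to at least one vertex $y$ with $f(y)=2$. The weight of $f$ is $\sum_{x\in V}f(x)$, and $\gamma_{sR}(G)$ is the minimum weight of an SRDF on $G$. The join $G_1\vee G_2$ of two graphs has vertex set $V(G_1)\cup V(G_2)$ (disjoint union) and edge set $E(G_1)\cup E(G_2)\cup\{uv: u\in V(G_1), v\in V(G_2)\}$. *)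

theory Defs
  imports Main
begin

text \<open>A (simple) graph is given by a vertex set V and a symmetric, irreflexive
adjacency relation E.\<close>

definition closed_nbhd :: "'a set \<Rightarrow> ('a \<Rightarrow> 'a \<Rightarrow> bool) \<Rightarrow> 'a \<Rightarrow> 'a set" where
  "closed_nbhd V E x = {x} \<union> {y \<in> V. E x y}"

definition is_SRDF :: "'a set \<Rightarrow> ('a \<Rightarrow> 'a \<Rightarrow> bool) \<Rightarrow> ('a \<Rightarrow> int) \<Rightarrow> bool" where
  "is_SRDF V E f \<longleftrightarrow>
     (\<forall>x\<in>V. f x \<in> {-1, 1, 2}) \<and>
     (\<forall>x\<in>V. (\<Sum>y\<in>closed_nbhd V E x. f y) \<ge> 1) \<and>
     (\<forall>x\<in>V. f x = -1 \<longrightarrow> (\<exists>y\<in>V. E x y \<and> f y = 2))"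

definition weight :: "'a set \<Rightarrow> ('a \<Rightarrow> int) \<Rightarrow> int" where
  "weight V f = (\<Sum>x\<in>V. f x)"

text \<open>Signed Roman domination number: minimum weight of an SRDF
(the set of weights is finite and nonempty for finite V).\<close>
definition gamma_sR :: "'a set \<Rightarrow> ('a \<Rightarrow> 'a \<Rightarrow> bool) \<Rightarrow> int" where
  "gamma_sR V E = Min {weight V f | f. is_SRDF V E f}"

text \<open>The cycle C_n on vertex set {0..<n} (n \<ge> 3).\<close>
definition cycle_adj :: "nat \<Rightarrow> nat \<Rightarrow> nat \<Rightarrow> bool" where
  "cycle_adj n i j \<longleftrightarrow> i < n \<and> j < n \<and> (j = (i + 1) mod n \<or> i = (j + 1) mod n)"

definition join_verts :: "'a set \<Rightarrow> 'b set \<Rightarrow> ('a + 'b) set" where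
  "join_verts V1 V2 = V1 <+> V2"

fun join_adj :: "('a \<Rightarrow> 'a \<Rightarrow> bool) \<Rightarrow> ('b \<Rightarrow> 'b \<Rightarrow> bool) \<Rightarrow> ('a + 'b) \<Rightarrow> ('a + 'b) \<Rightarrow> bool" where
  "join_adj E1 E2 (Inl u) (Inl v) = E1 u v"
| "join_adj E1 E2 (Inr u) (Inr v) = E2 u v"
| "join_adj E1 E2 (Inl u) (Inr v) = True"
| "join_adj E1 E2 (Inr u) (Inl v) = True"

end

theory Submission
  imports Defs
begin

lemma suc_mod: "(u::nat) < m \<Longrightarrow> (u+1) mod m = (if u + 1 = m then 0 else u + 1)"
  by auto

lemma pred_mod: "(x::nat) < m \<Longrightarrow> (x+m-1) mod m = (if x = 0 then m - 1 else x - 1)"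
proof (cases "x = 0")
  case True
  assume "x < m" then show ?thesis using True by simp
next
  case False
  assume "x < m"
  then have e: "x + m - 1 = (x - 1) + m" using False by simp
  have "((x - 1) + m) mod m = (x - 1) mod m" by (rule mod_add_self2)
  then show ?thesis using False \<open>x < m\<close> e by simp
qed

lemma cyc:
  assumes "x < m" "u < m" "m \<ge> 3"
  shows "cycle_adj m x u \<longleftrightarrow> (u = (x+1) mod m \<or> u = (x+m-1) mod m)"
  using assms suc_mod[OF assms(1)] suc_mod[OF assms(2)] pred_mod[OF assms(1)] unfolding cycle_adj_def
  by auto

lemma cyc_distinct:
  assumes "(x::nat) < m" "m \<ge> 3"
  shows "(x+1) mod m \<noteq> (x+m-1) mod m" "x \<noteq> (x+1) mod m" "x \<noteq> (x+m-1) mod m"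
  using assms suc_mod[OF assms(1)] pred_mod[OF assms(1)] by auto

lemma nbhd_l:
  assumes "(x::nat) < m" "m \<ge> 3"
  shows "closed_nbhd (join_verts {0..<m} {0..<n}) (join_adj (cycle_adj m) (cycle_adj n)) (Inl x)
     = Inl ` {x, (x+1) mod m, (x+m-1) mod m} \<union> Inr ` {0..<n}"
proof -
  have "(x+1) mod m < m" "(x+m-1) mod m < m" using assms by auto
  then show ?thesis
    using assms unfolding closed_nbhd_def join_verts_def
    apply (intro set_eqI)
    subgoal for y by (cases y) (auto simp: cyc)
    done
qed

lemma nbhd_r:
  assumes "x < n" "n \<ge> 3"
  shows "closed_nbhd (join_verts {0..<m} {0..<n}) (join_adj (cycle_adj m) (cycle_adj n)) (Inr x)
     = Inr ` {x, (x+1) mod n, (x+n-1) mod n} \<union> Inl ` {0..<m}"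
proof -
  have "(x+1) mod n < n" "(x+n-1) mod n < n" using assms by auto
  then show ?thesis
    using assms unfolding closed_nbhd_def join_verts_def
    apply (intro set_eqI)
    subgoal for y by (cases y) (auto simp: cyc)
    done
qed

lemma sum3:
  assumes "(x::nat) < m" "m \<ge> 3"
  shows "(\<Sum>y\<in>{x, (x+1) mod m, (x+m-1) mod m}. g y) = g x + g ((x+1) mod m) + g ((x+m-1) mod m)"
  using cyc_distinct[OF assms] by (simp add: algebra_simps)

lemma nbsum_l:
  fixes F :: "nat + nat \<Rightarrow> int"
  assumes "(x::nat) < m" "m \<ge> 3"
  shows "(\<Sum>y\<in>closed_nbhd (join_verts {0..<m} {0..<n}) (join_adj (cycle_adj m) (cycle_adj n)) (Inl x). F y)
     = F (Inl x) + F (Inl ((x+1) mod m)) + F (Inl ((x+m-1) mod m)) + (\<Sum>y<n. F (Inr y))"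
proof -
  have "(\<Sum>y\<in>Inl ` {x, (x+1) mod m, (x+m-1) mod m} \<union> Inr ` {0..<n}. F y)
      = (\<Sum>y\<in>Inl ` {x, (x+1) mod m, (x+m-1) mod m}. F y) + (\<Sum>y\<in>Inr ` {0..<n}. F y)"
    by (rule sum.union_disjoint) auto
  also have "\<dots> = (\<Sum>y\<in>{x, (x+1) mod m, (x+m-1) mod m}. F (Inl y)) + (\<Sum>y\<in>{0..<n}. F (Inr y))"
    by (simp only: sum.reindex[OF inj_Inl] sum.reindex[OF inj_Inr] comp_def)
  finally show ?thesis using nbhd_l[OF assms] sum3[OF assms, of "\<lambda>y. F (Inl y)"]
    by (simp add: atLeast0LessThan)
qed

lemma nbsum_r:
  fixes F :: "nat + nat \<Rightarrow> int"
  assumes "x < n" "n \<ge> 3"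
  shows "(\<Sum>y\<in>closed_nbhd (join_verts {0..<m} {0..<n}) (join_adj (cycle_adj m) (cycle_adj n)) (Inr x). F y)
     = F (Inr x) + F (Inr ((x+1) mod n)) + F (Inr ((x+n-1) mod n)) + (\<Sum>y<m. F (Inl y))"
proof -
  have "(\<Sum>y\<in>Inr ` {x, (x+1) mod n, (x+n-1) mod n} \<union> Inl ` {0..<m}. F y)
      = (\<Sum>y\<in>Inr ` {x, (x+1) mod n, (x+n-1) mod n}. F y) + (\<Sum>y\<in>Inl ` {0..<m}. F y)"
    by (rule sum.union_disjoint) auto
  also have "\<dots> = (\<Sum>y\<in>{x, (x+1) mod n, (x+n-1) mod n}. F (Inr y)) + (\<Sum>y\<in>{0..<m}. F (Inl y))"
    by (simp only: sum.reindex[OF inj_Inl] sum.reindex[OF inj_Inr] comp_def)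
  finally show ?thesis using nbhd_r[OF assms, of m] sum3[OF assms, of "\<lambda>y. F (Inr y)"]
    by (simp add: atLeast0LessThan)
qed

lemma shift1:
  fixes g :: "nat \<Rightarrow> int"
  assumes "m \<ge> 1"
  shows "(\<Sum>x<m. g ((x+1) mod m)) = (\<Sum>x<m. g x)"
proof -
  obtain k where k: "m = Suc k" using assms by (cases m) auto
  have "(\<Sum>x<Suc k. g ((x+1) mod Suc k)) = (\<Sum>x<k. g ((x+1) mod Suc k)) + g 0"
    by simp
  also have "(\<Sum>x<k. g ((x+1) mod Suc k)) = (\<Sum>x<k. g (Suc x))"
    by (rule sum.cong) auto
  also have "\<dots> + g 0 = (\<Sum>x<Suc k. g x)"
    by (subst sum.lessThan_Suc_shift) simp
  finally show ?thesis using k by simp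
qed

lemma shift2:
  fixes g :: "nat \<Rightarrow> int"
  assumes "m \<ge> 1"
  shows "(\<Sum>x<m. g ((x+m-1) mod m)) = (\<Sum>x<m. g x)"
proof -
  obtain k where k: "m = Suc k" using assms by (cases m) auto
  have "(\<Sum>x<Suc k. g ((x+Suc k-1) mod Suc k)) = g ((0 + Suc k - 1) mod Suc k) + (\<Sum>x<k. g ((Suc x+Suc k-1) mod Suc k))"
    by (rule sum.lessThan_Suc_shift)
  also have "(\<Sum>x<k. g ((Suc x+Suc k-1) mod Suc k)) = (\<Sum>x<k. g x)"
  proof (rule sum.cong)
    fix x assume "x \<in> {..<k}"
    then have "Suc x + Suc k - 1 = x + Suc k" by simp
    moreover have "(x + Suc k) mod Suc k = x mod Suc k" by (rule mod_add_self2)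
    ultimately show "g ((Suc x+Suc k-1) mod Suc k) = g x" using \<open>x \<in> {..<k}\<close> by simp
  qed simp
  also have "g ((0 + Suc k - 1) mod Suc k) + (\<Sum>x<k. g x) = (\<Sum>x<Suc k. g x)"
    by simp
  finally show ?thesis using k by simp
qed

lemma arith_key:
  fixes a b :: int and m n :: nat
  assumes "3*a + int m * b \<ge> int m" "3*b + int n * a \<ge> int n" "m \<ge> 13" "n \<ge> 13"
  shows "a + b \<ge> 2"
proof (rule ccontr)
  assume c: "\<not> a + b \<ge> 2"
  show False
  proof (cases "b \<le> 0")
    case True
    have "int m * (1 - b) \<ge> 13 * (1 - b)" using True assms(3) by (intro mult_right_mono) auto
    then show ?thesis using assms(1) c True by (simp add: algebra_simps)
  next
    case False
    then have "a \<le> 0" using c by simp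
    have "int n * (1 - a) \<ge> 13 * (1 - a)" using \<open>a \<le> 0\<close> assms(4) by (intro mult_right_mono) auto
    then show ?thesis using assms(2) c \<open>a \<le> 0\<close> by (simp add: algebra_simps)
  qed
qed

lemma weight_split:
  fixes F :: "nat + nat \<Rightarrow> int"
  shows "weight (join_verts {0..<m} {0..<n}) F = (\<Sum>y<m. F (Inl y)) + (\<Sum>y<n. F (Inr y))"
  unfolding weight_def join_verts_def
  by (simp add: sum.Plus atLeast0LessThan comp_def)

lemma lower:
  fixes F :: "nat + nat \<Rightarrow> int" and m n :: nat
  assumes srdf: "is_SRDF (join_verts {0..<m} {0..<n}) (join_adj (cycle_adj m) (cycle_adj n)) F"
    and mn: "m \<ge> 13" "n \<ge> 13"
  shows "weight (join_verts {0..<m} {0..<n}) F \<ge> 2"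
proof -
  define S1 where "S1 = (\<Sum>y<m. F (Inl y))"
  define S2 where "S2 = (\<Sum>y<n. F (Inr y))"
  have nb: "\<forall>x\<in>join_verts {0..<m} {0..<n}.
      (\<Sum>y\<in>closed_nbhd (join_verts {0..<m} {0..<n}) (join_adj (cycle_adj m) (cycle_adj n)) x. F y) \<ge> 1"
    using srdf unfolding is_SRDF_def by blast
  have l: "F (Inl x) + F (Inl ((x+1) mod m)) + F (Inl ((x+m-1) mod m)) + S2 \<ge> 1" if "x < m" for x
  proof -
    have "Inl x \<in> join_verts {0..<m} {0..<n}" using that by (auto simp: join_verts_def)
    then show ?thesis using nb nbsum_l[OF that, of F n] mn unfolding S2_def by auto
  qed
  have r: "F (Inr x) + F (Inr ((x+1) mod n)) + F (Inr ((x+n-1) mod n)) + S1 \<ge> 1" if "x < n" for x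
  proof -
    have "Inr x \<in> join_verts {0..<m} {0..<n}" using that by (auto simp: join_verts_def)
    then show ?thesis using nb nbsum_r[OF that, of F m] mn unfolding S1_def by auto
  qed
  have "(\<Sum>x<m. (1::int)) \<le> (\<Sum>x<m. F (Inl x) + F (Inl ((x+1) mod m)) + F (Inl ((x+m-1) mod m)) + S2)"
    by (rule sum_mono) (use l in auto)
  also have "\<dots> = S1 + (\<Sum>x<m. F (Inl ((x+1) mod m))) + (\<Sum>x<m. F (Inl ((x+m-1) mod m))) + int m * S2"
    unfolding S1_def by (simp add: sum.distrib)
  also have "\<dots> = 3 * S1 + int m * S2"
    using shift1[of m "\<lambda>y. F (Inl y)"] shift2[of m "\<lambda>y. F (Inl y)"] mn unfolding S1_def by simp
  finally have A: "3 * S1 + int m * S2 \<ge> int m" by simp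
  have "(\<Sum>x<n. (1::int)) \<le> (\<Sum>x<n. F (Inr x) + F (Inr ((x+1) mod n)) + F (Inr ((x+n-1) mod n)) + S1)"
    by (rule sum_mono) (use r in auto)
  also have "\<dots> = S2 + (\<Sum>x<n. F (Inr ((x+1) mod n))) + (\<Sum>x<n. F (Inr ((x+n-1) mod n))) + int n * S1"
    unfolding S2_def by (simp add: sum.distrib)
  also have "\<dots> = 3 * S2 + int n * S1"
    using shift1[of n "\<lambda>y. F (Inr y)"] shift2[of n "\<lambda>y. F (Inr y)"] mn unfolding S2_def by simp
  finally have B: "3 * S2 + int n * S1 \<ge> int n" by simp
  have "S1 + S2 \<ge> 2" by (rule arith_key[OF A B mn])
  then show ?thesis unfolding weight_split S1_def S2_def .
qed

definition gg :: "nat \<Rightarrow> nat \<Rightarrow> int" where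
  "gg k i = (if i mod 3 = 2 \<or> i = k - 1 then 2 else -1)"

definition hh :: "nat \<Rightarrow> int" where
  "hh i = (if i mod 3 = 2 then 2 else -1)"

lemma hh_sum3: "(\<Sum>i<3*k. hh i) = 0"
proof (induction k)
  case 0 then show ?case by simp
next
  case (Suc k)
  have e: "3 * Suc k = Suc (Suc (Suc (3*k)))" by simp
  have "(3*k) mod 3 = 0" "(Suc (3*k)) mod 3 = 1" "(Suc (Suc (3*k))) mod 3 = 2" by (simp_all add: mod_Suc)
  then show ?case unfolding e using Suc by (simp add: hh_def)
qed

lemma gg_sum:
  assumes "k mod 3 = 2"
  shows "(\<Sum>i<k. gg k i) = 1"
proof -
  define q where "q = k div 3"
  have q: "k = Suc (Suc (3*q))" using div_mult_mod_eq[of k 3] assms unfolding q_def by simp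
  have "(3*q) mod 3 = 0" "(Suc (3*q)) mod 3 = 1" by (simp_all add: mod_Suc)
  then have hs: "(\<Sum>i<k. hh i) = -2" using hh_sum3[of q] q by (simp add: hh_def)
  have "k - 1 = Suc (3*q)" using q by simp
  then have km: "(k - 1) mod 3 = 1" by (simp add: mod_Suc)
  have "(\<Sum>i<k. gg k i) = (\<Sum>i<k. hh i + (if i = k - 1 then 3 else 0))"
    using km by (intro sum.cong) (auto simp: gg_def hh_def)
  also have "\<dots> = (\<Sum>i<k. hh i) + 3" using q by (simp add: sum.distrib)
  finally show ?thesis using hs by simp
qed

lemma gg_window:
  assumes "x < k" "k \<ge> 3"
  shows "gg k x + gg k ((x+1) mod k) + gg k ((x+k-1) mod k) \<ge> 0"
proof -
  have "gg k x = 2 \<or> gg k ((x+1) mod k) = 2 \<or> gg k ((x+k-1) mod k) = 2"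
  proof (cases "x = 0")
    case True
    then show ?thesis using pred_mod[OF assms(1)] unfolding gg_def by simp
  next
    case False
    show ?thesis
    proof (cases "x = k - 1")
      case True then show ?thesis unfolding gg_def by simp
    next
      case False2: False
      then have "(x+1) mod k = x + 1" "(x+k-1) mod k = x - 1"
        using suc_mod[OF assms(1)] pred_mod[OF assms(1)] \<open>x \<noteq> 0\<close> assms by auto
      moreover have "x mod 3 = 2 \<or> (x+1) mod 3 = 2 \<or> (x - 1) mod 3 = 2"
      proof -
        obtain y where "x = Suc y" using \<open>x \<noteq> 0\<close> by (cases x) auto
        moreover have "Suc y mod 3 = 2 \<or> Suc (Suc y) mod 3 = 2 \<or> y mod 3 = 2"
          using mod_less_divisor[of 3 y] by (auto simp add: mod_Suc)
        ultimately show ?thesis by simp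
      qed
      ultimately show ?thesis unfolding gg_def by auto
    qed
  qed
  moreover have "\<And>i. gg k i \<ge> -1" unfolding gg_def by auto
  ultimately show ?thesis by (smt (verit))
qed


lemma constr:
  fixes m n :: nat
  assumes "m \<ge> 3" "n \<ge> 3" "m mod 3 = 2" "n mod 3 = 2"
  shows "is_SRDF (join_verts {0..<m} {0..<n}) (join_adj (cycle_adj m) (cycle_adj n)) (case_sum (gg m) (gg n))"
    and "weight (join_verts {0..<m} {0..<n}) (case_sum (gg m) (gg n)) = 2"
proof -
  let ?F = "case_sum (gg m) (gg n) :: nat + nat \<Rightarrow> int"
  let ?V = "join_verts {0..<m} {0..<n}"
  have sm: "(\<Sum>y<m. ?F (Inl y)) = 1" using gg_sum[OF assms(3)] by simp
  have sn: "(\<Sum>y<n. ?F (Inr y)) = 1" using gg_sum[OF assms(4)] by simp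
  show "weight ?V ?F = 2" unfolding weight_split using sm sn by simp
  have vals: "?F x \<in> {-1, 1, 2}" for x by (cases x) (auto simp: gg_def)
  have nbh: "(\<Sum>y\<in>closed_nbhd ?V (join_adj (cycle_adj m) (cycle_adj n)) x. ?F y) \<ge> 1" if "x \<in> ?V" for x
  proof -
    from that consider (l) u where "x = Inl u" "u < m" | (r) u where "x = Inr u" "u < n"
      unfolding join_verts_def by auto
    then show ?thesis
    proof cases
      case l
      then show ?thesis using nbsum_l[OF l(2) assms(1), of ?F n] sn gg_window[OF l(2) assms(1)] by simp
    next
      case r
      then show ?thesis using nbsum_r[OF r(2) assms(2), of ?F m] sm gg_window[OF r(2) assms(2)] by simp
    qed
  qed
  have neg: "\<exists>y\<in>?V. join_adj (cycle_adj m) (cycle_adj n) x y \<and> ?F y = 2" if "x \<in> ?V" for x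
  proof -
    from that consider (l) u where "x = Inl u" "u < m" | (r) u where "x = Inr u" "u < n"
      unfolding join_verts_def by auto
    then show ?thesis
    proof cases
      case l
      have "Inr (n-1) \<in> ?V" using assms by (auto simp: join_verts_def)
      then show ?thesis using l by (intro bexI[of _ "Inr (n-1)"]) (auto simp: gg_def)
    next
      case r
      have "Inl (m-1) \<in> ?V" using assms by (auto simp: join_verts_def)
      then show ?thesis using r by (intro bexI[of _ "Inl (m-1)"]) (auto simp: gg_def)
    qed
  qed
  show "is_SRDF ?V (join_adj (cycle_adj m) (cycle_adj n)) ?F"
    unfolding is_SRDF_def using vals nbh neg by blast
qed

theorem mainTheorem8:
  fixes m n :: nat
  assumes "m \<ge> 13" and "n \<ge> 13" and "m mod 3 = 2" and "n mod 3 = 2"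
  shows "gamma_sR (join_verts {0..<m} {0..<n}) (join_adj (cycle_adj m) (cycle_adj n)) = 2"
proof -
  let ?V = "join_verts {0..<m} {0..<n}"
  let ?E = "join_adj (cycle_adj m) (cycle_adj n)"
  let ?W = "{weight ?V f | f. is_SRDF ?V ?E f}"
  have fin: "finite ?V" unfolding join_verts_def by simp
  have sub: "?W \<subseteq> {2 .. 2 * int (card ?V)}"
  proof
    fix w assume "w \<in> ?W"
    then obtain f where f: "is_SRDF ?V ?E f" "w = weight ?V f" by blast
    have "w \<ge> 2" using lower[OF f(1) assms(1,2)] f(2) by simp
    moreover have "weight ?V f \<le> (\<Sum>x\<in>?V. 2)" unfolding weight_def
      using f(1) unfolding is_SRDF_def by (intro sum_mono) auto
    ultimately show "w \<in> {2 .. 2 * int (card ?V)}" using f(2) by simp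
  qed
  have m3: "m \<ge> 3" and n3: "n \<ge> 3" using assms by simp_all
  note c = constr[OF m3 n3 assms(3,4)]
  have "2 \<in> ?W" using c(1) c(2)[symmetric] by blast
  then show ?thesis unfolding gamma_sR_def
    using sub by (intro Min_eqI) (auto intro: finite_subset)
qed

end
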